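(* Let $A$ be a commutative ring and $C$ a commutative noetherian $A$-algebra. If a $D(C,A)$-module $M$ has finite length in the category of $D(C,A)$-modules, then $M$ has only finitely many associated primes as a $C$-module; moreover, every simple $D(C,A)$-module has exactly one associated prime as a $C$-module.
   Context: $D(C,A)$ denotes the ring of $A$-linear differential operators on $C$: for $r\in C$, multiplication by $r$ is a differential operator of order $0$; an additive map $\delta:C\to C$ is a differential operator of order $\le n$ ($n\ge1$) if all commutators $r\circ\delta-\delta\circ r$ ($r\in C$) have order $\le n-1$; $D(C,A)$ consists of all such operators that are $A$-linear. *)

theory Defs
  imports Main
begin

definition is_ideal :: "'c::comm_ring_1 set \<Rightarrow> bool" where
  "is_ideal I \<longleftrightarrow> 0 \<in> I \<and> (\<forall>x\<in>I. \<forall>y\<in>I. x + y \<in> I) \<and> (\<forall>r. \<forall>x\<in>I. r * x \<in> I)"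

definition is_prime_ideal :: "'c::comm_ring_1 set \<Rightarrow> bool" where
  "is_prime_ideal P \<longleftrightarrow> is_ideal P \<and> P \<noteq> UNIV \<and> (\<forall>a b. a * b \<in> P \<longrightarrow> a \<in> P \<or> b \<in> P)"

definition noetherian_ring :: "'c::comm_ring_1 itself \<Rightarrow> bool" where
  "noetherian_ring _ \<longleftrightarrow> (\<forall>I::'c set. is_ideal I \<longrightarrow>
      (\<exists>S. finite S \<and> S \<subseteq> I \<and> I = {\<Sum>s\<in>S. f s * s | f. True}))"

definition ring_hom_map :: "('a::comm_ring_1 \<Rightarrow> 'c::comm_ring_1) \<Rightarrow> bool" where
  "ring_hom_map \<phi> \<longleftrightarrow> \<phi> 1 = 1 \<and> (\<forall>x y. \<phi> (x + y) = \<phi> x + \<phi> y) \<and> (\<forall>x y. \<phi> (x * y) = \<phi> x * \<phi> y)"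

fun diff_op :: "nat \<Rightarrow> ('c::comm_ring_1 \<Rightarrow> 'c) \<Rightarrow> bool" where
  "diff_op 0 \<delta> = (\<exists>r. \<delta> = (\<lambda>x. r * x))"
| "diff_op (Suc n) \<delta> = ((\<forall>x y. \<delta> (x + y) = \<delta> x + \<delta> y) \<and>
      (\<forall>r. diff_op n (\<lambda>x. r * \<delta> x - \<delta> (r * x))))"

definition Dops :: "('a::comm_ring_1 \<Rightarrow> 'c::comm_ring_1) \<Rightarrow> ('c \<Rightarrow> 'c) set" where
  "Dops \<phi> = {\<delta>. (\<exists>n. diff_op n \<delta>) \<and> (\<forall>x y. \<delta> (x + y) = \<delta> x + \<delta> y)
               \<and> (\<forall>a x. \<delta> (\<phi> a * x) = \<phi> a * \<delta> x)}"

definition D_module :: "('a::comm_ring_1 \<Rightarrow> 'c::comm_ring_1) \<Rightarrow> (('c \<Rightarrow> 'c) \<Rightarrow> 'm::ab_group_add \<Rightarrow> 'm) \<Rightarrow> bool" where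
  "D_module \<phi> act \<longleftrightarrow>
     (\<forall>\<delta>\<in>Dops \<phi>. \<forall>x y. act \<delta> (x + y) = act \<delta> x + act \<delta> y) \<and>
     (\<forall>\<delta>\<in>Dops \<phi>. \<forall>\<epsilon>\<in>Dops \<phi>. \<forall>x. act (\<lambda>c. \<delta> c + \<epsilon> c) x = act \<delta> x + act \<epsilon> x) \<and>
     (\<forall>\<delta>\<in>Dops \<phi>. \<forall>\<epsilon>\<in>Dops \<phi>. \<forall>x. act (\<delta> \<circ> \<epsilon>) x = act \<delta> (act \<epsilon> x)) \<and>
     (\<forall>x. act id x = x)"

definition D_submodule :: "('a::comm_ring_1 \<Rightarrow> 'c::comm_ring_1) \<Rightarrow> (('c \<Rightarrow> 'c) \<Rightarrow> 'm::ab_group_add \<Rightarrow> 'm) \<Rightarrow> 'm set \<Rightarrow> bool" where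
  "D_submodule \<phi> act N \<longleftrightarrow> 0 \<in> N \<and> (\<forall>x\<in>N. \<forall>y\<in>N. x + y \<in> N) \<and> (\<forall>x\<in>N. - x \<in> N) \<and>
      (\<forall>\<delta>\<in>Dops \<phi>. \<forall>x\<in>N. act \<delta> x \<in> N)"

text \<open>A composition series: a chain {0} = N_0 < N_1 < ... < N_k = M of D-submodules
  whose successive quotients N_(i+1)/N_i are simple, i.e. there is no D-submodule strictly in between.\<close>
definition composition_series :: "('a::comm_ring_1 \<Rightarrow> 'c::comm_ring_1) \<Rightarrow> (('c \<Rightarrow> 'c) \<Rightarrow> 'm::ab_group_add \<Rightarrow> 'm) \<Rightarrow> 'm set list \<Rightarrow> bool" where
  "composition_series \<phi> act Ns \<longleftrightarrow> Ns \<noteq> [] \<and> hd Ns = {0} \<and> last Ns = UNIV \<and>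
     (\<forall>N\<in>set Ns. D_submodule \<phi> act N) \<and>
     (\<forall>i. Suc i < length Ns \<longrightarrow> Ns ! i \<subset> Ns ! Suc i \<and>
        \<not> (\<exists>L. D_submodule \<phi> act L \<and> Ns ! i \<subset> L \<and> L \<subset> Ns ! Suc i))"

definition finite_length :: "('a::comm_ring_1 \<Rightarrow> 'c::comm_ring_1) \<Rightarrow> (('c \<Rightarrow> 'c) \<Rightarrow> 'm::ab_group_add \<Rightarrow> 'm) \<Rightarrow> bool" where
  "finite_length \<phi> act \<longleftrightarrow> (\<exists>Ns. composition_series \<phi> act Ns)"

definition simple_D_module :: "('a::comm_ring_1 \<Rightarrow> 'c::comm_ring_1) \<Rightarrow> (('c \<Rightarrow> 'c) \<Rightarrow> 'm::ab_group_add \<Rightarrow> 'm) \<Rightarrow> bool" where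
  "simple_D_module \<phi> act \<longleftrightarrow> (UNIV :: 'm set) \<noteq> {0} \<and>
     (\<forall>N. D_submodule \<phi> act N \<longrightarrow> N = {0} \<or> N = UNIV)"

section \<open>Associated primes of M viewed as a C-module (via multiplication operators)\<close>

definition C_ann :: "(('c::comm_ring_1 \<Rightarrow> 'c) \<Rightarrow> 'm::ab_group_add \<Rightarrow> 'm) \<Rightarrow> 'm \<Rightarrow> 'c set" where
  "C_ann act m = {r. act (\<lambda>x. r * x) m = 0}"

definition assoc_primes :: "(('c::comm_ring_1 \<Rightarrow> 'c) \<Rightarrow> 'm::ab_group_add \<Rightarrow> 'm) \<Rightarrow> 'c set set" where
  "assoc_primes act = {P. is_prime_ideal P \<and> (\<exists>m. P = C_ann act m)}"

end

theory Submission
  imports Defs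
begin

lemma diff_op_mult_left: "diff_op n \<delta> \<Longrightarrow> diff_op n (\<lambda>x. r * (\<delta>::'c::comm_ring_1\<Rightarrow>'c) x)"
proof (induction n arbitrary: \<delta>)
  case 0
  then obtain s where "\<delta> = (\<lambda>x. s * x)" by auto
  then show ?case by (auto intro!: exI[of _ "r*s"] simp: mult.assoc)
next
  case (Suc n)
  have e: "\<And>s. (\<lambda>x. s * (r * \<delta> x) - r * \<delta> (s * x)) = (\<lambda>x. r * (s * \<delta> x - \<delta> (s * x)))"
    by (auto simp: algebra_simps)
  show ?case using Suc by (simp add: e distrib_left)
qed

lemma diff_op_mult_right: "diff_op n \<delta> \<Longrightarrow> diff_op n (\<lambda>x. (\<delta>::'c::comm_ring_1\<Rightarrow>'c) (r * x))"
proof (induction n arbitrary: \<delta>)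
  case 0
  then obtain s where "\<delta> = (\<lambda>x. s * x)" by auto
  then show ?case by (auto intro!: exI[of _ "s*r"] simp: mult.assoc)
next
  case (Suc n)
  have e: "\<And>s. (\<lambda>x. s * \<delta> (r * x) - \<delta> (r * (s * x))) = (\<lambda>x. (\<lambda>y. s * \<delta> y - \<delta> (s * y)) (r * x))"
    by (auto simp: algebra_simps)
  have "\<forall>s. diff_op n (\<lambda>x. s * \<delta> (r * x) - \<delta> (r * (s * x)))"
  proof
    fix s
    have "diff_op n (\<lambda>y. s * \<delta> y - \<delta> (s * y))" using Suc.prems by simp
    from Suc.IH[OF this] show "diff_op n (\<lambda>x. s * \<delta> (r * x) - \<delta> (r * (s * x)))"
      by (simp add: mult.left_commute)
  qed
  then show ?case using Suc.prems by (simp add: distrib_left)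
qed

lemma mop_Dops: "(\<lambda>x. r * x) \<in> Dops \<phi>"
proof -
  have "diff_op 0 (\<lambda>x. r * x)" by auto
  then have "\<exists>n. diff_op n (\<lambda>x. r * x)" by blast
  then show ?thesis unfolding Dops_def mem_Collect_eq by (auto simp: distrib_left mult.left_commute)
qed

lemma Dops_mult_right: "\<delta> \<in> Dops \<phi> \<Longrightarrow> (\<lambda>x. \<delta> (r * x)) \<in> Dops \<phi>"
  unfolding Dops_def by (auto intro: diff_op_mult_right simp: distrib_left) (metis mult.left_commute)

lemma Dops_comm: "\<delta> \<in> Dops \<phi> \<Longrightarrow> diff_op (Suc n) \<delta> \<Longrightarrow> (\<lambda>x. r * \<delta> x - \<delta> (r * x)) \<in> Dops \<phi> \<and> diff_op n (\<lambda>x. r * \<delta> x - \<delta> (r * x))"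
  unfolding Dops_def by (auto simp: distrib_left right_diff_distrib) (metis mult.left_commute)+

lemma prime_pow: "is_prime_ideal P \<Longrightarrow> r ^ k \<in> P \<Longrightarrow> r \<in> P"
proof (induction k)
  case 0
  have one: "1 \<in> P" using 0 by simp
  have "\<forall>r. \<forall>x\<in>P. r * x \<in> P" using 0 unfolding is_prime_ideal_def is_ideal_def by blast
  then have "\<forall>s. s * 1 \<in> P" using one by blast
  then have "P = UNIV" by auto
  then show ?case using 0 unfolding is_prime_ideal_def by auto
next
  case (Suc k)
  then show ?case unfolding is_prime_ideal_def by auto
qed


lemma ideal_sum: assumes I: "is_ideal I" shows "finite S \<Longrightarrow> S \<subseteq> I \<Longrightarrow> (\<Sum>s\<in>S. f s * s) \<in> I"
proof (induction S rule: finite_induct)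
  case empty then show ?case using I unfolding is_ideal_def by simp
next
  case (insert x F)
  then have "f x * x \<in> I" "(\<Sum>s\<in>F. f s * s) \<in> I" using I unfolding is_ideal_def by auto
  then show ?case using insert I unfolding is_ideal_def by simp
qed

lemma noeth_max:
  assumes noeth: "noetherian_ring TYPE('c::comm_ring_1)" and ne: "F \<noteq> {}"
    and id: "\<forall>I\<in>F. is_ideal (I::'c set)"
  shows "\<exists>I\<in>F. \<forall>J\<in>F. I \<subseteq> J \<longrightarrow> J = I"
proof (rule ccontr)
  assume "\<not> ?thesis"
  then have "\<forall>I\<in>F. \<exists>J\<in>F. I \<subset> J" by blast
  then obtain g where g: "\<forall>I\<in>F. g I \<in> F \<and> I \<subset> g I" by metis
  obtain I0 where I0: "I0 \<in> F" using ne by blast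
  define f where "f i = (g ^^ i) I0" for i
  have fF: "f i \<in> F" for i by (induction i) (auto simp: f_def I0 g)
  have fs: "f i \<subset> f (Suc i)" for i using g fF[of i] by (simp add: f_def)
  have mono: "i \<le> j \<Longrightarrow> f i \<subseteq> f j" for i j using lift_Suc_mono_le[of f i j] fs by blast
  define U where "U = \<Union> (range f)"
  have U: "is_ideal U" unfolding is_ideal_def
  proof (intro conjI ballI allI)
    show "0 \<in> U" using id fF[of 0] unfolding U_def is_ideal_def by blast
  next
    fix x y assume "x \<in> U" "y \<in> U"
    then obtain i j where "x \<in> f i" "y \<in> f j" unfolding U_def by blast
    then have "x \<in> f (max i j)" "y \<in> f (max i j)" using mono[of i "max i j"] mono[of j "max i j"] by auto
    then have "x + y \<in> f (max i j)" using id fF unfolding is_ideal_def by blast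
    then show "x + y \<in> U" unfolding U_def by blast
  next
    fix r x assume "x \<in> U"
    then obtain i where "x \<in> f i" unfolding U_def by blast
    then have "r * x \<in> f i" using id fF unfolding is_ideal_def by blast
    then show "r * x \<in> U" unfolding U_def by blast
  qed
  from noeth[unfolded noetherian_ring_def, rule_format, OF U]
  obtain S where S: "finite S" "S \<subseteq> U" "U = {\<Sum>s\<in>S. h s * s | h. True}"
    by blast
  have "S \<subseteq> U \<Longrightarrow> \<exists>N. S \<subseteq> f N" using S(1)
  proof (induction S rule: finite_induct)
    case empty then show ?case by blast
  next
    case (insert x S)
    then obtain N where N: "S \<subseteq> f N" by blast
    obtain i where i: "x \<in> f i" using insert.prems unfolding U_def by blast
    then show ?case using N mono[of i "max i N"] mono[of N "max i N"] by (intro exI[of _ "max i N"]) auto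
  qed
  then obtain N where N: "S \<subseteq> f N" using S by blast
  have "U \<subseteq> f N"
  proof
    fix u assume "u \<in> U"
    then obtain h where "u = (\<Sum>s\<in>S. h s * s)" using S(3) by blast
    then show "u \<in> f N" using ideal_sum[OF _ S(1) N] id fF by blast
  qed
  moreover have "f (Suc N) \<subseteq> U" unfolding U_def by blast
  ultimately show False using fs[of N] by blast
qed

context
  fixes \<phi> :: "'a::comm_ring_1 \<Rightarrow> 'c::comm_ring_1"
    and act :: "('c \<Rightarrow> 'c) \<Rightarrow> 'm::ab_group_add \<Rightarrow> 'm"
  assumes D: "D_module \<phi> act"
begin

lemma act_add: "\<delta> \<in> Dops \<phi> \<Longrightarrow> act \<delta> (x + y) = act \<delta> x + act \<delta> y"
  using D unfolding D_module_def by auto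

lemma act_zero: "\<delta> \<in> Dops \<phi> \<Longrightarrow> act \<delta> 0 = 0"
  using act_add[of \<delta> 0 0] by simp

lemma act_neg: assumes "\<delta> \<in> Dops \<phi>" shows "act \<delta> (- x) = - act \<delta> x"
proof -
  have "act \<delta> x + act \<delta> (- x) = 0" using act_add[OF assms, of x "-x"] act_zero[OF assms] by simp
  then show ?thesis by (metis add.inverse_unique)
qed

lemma act_sum: "\<delta> \<in> Dops \<phi> \<Longrightarrow> \<epsilon> \<in> Dops \<phi> \<Longrightarrow> act (\<lambda>c. \<delta> c + \<epsilon> c) x = act \<delta> x + act \<epsilon> x"
  using D unfolding D_module_def by auto

lemma act_comp: "\<delta> \<in> Dops \<phi> \<Longrightarrow> \<epsilon> \<in> Dops \<phi> \<Longrightarrow> act (\<delta> \<circ> \<epsilon>) x = act \<delta> (act \<epsilon> x)"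
  using D unfolding D_module_def by auto

lemma act_mop_mult: "act (\<lambda>c. (a * b) * c) x = act (\<lambda>c. a * c) (act (\<lambda>c. b * c) x)"
proof -
  have "act (\<lambda>c. (a * b) * c) x = act ((\<lambda>c. a * c) \<circ> (\<lambda>c. b * c)) x"
    by (simp add: o_def mult.assoc)
  also have "\<dots> = act (\<lambda>c. a * c) (act (\<lambda>c. b * c) x)" by (rule act_comp[OF mop_Dops mop_Dops])
  finally show ?thesis .
qed

lemma act_mop_1: "act (\<lambda>c. 1 * c) x = x"
proof -
  have "(\<lambda>c::'c. 1 * c) = id" by (simp add: fun_eq_iff)
  then show ?thesis using D unfolding D_module_def by simp
qed

lemma act_idl: "act (\<lambda>c::'c. c) x = x"
  using D unfolding D_module_def id_def by simp

lemma act_one: "act ((*) (1::'c)) x = x"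
proof -
  have "((*) (1::'c)) = (\<lambda>x. x)" by (simp add: fun_eq_iff)
  then show ?thesis using act_idl by simp
qed

lemma act_mop_0: "act (\<lambda>c. 0 * c) x = 0"
proof -
  have "(\<lambda>c::'c. 0 * c) = (\<lambda>c. (\<lambda>c. 0 * c) c + (\<lambda>c. 0 * c) c)" by auto
  then have "act (\<lambda>c. 0 * c) x = act (\<lambda>c. 0 * c) x + act (\<lambda>c. 0 * c) x"
    using act_sum[OF mop_Dops mop_Dops, of 0 0 x] by simp
  then show ?thesis by simp
qed

lemma act_mop_add: "act (\<lambda>c. (a + b) * c) x = act (\<lambda>c. a * c) x + act (\<lambda>c. b * c) x"
proof -
  have "(\<lambda>c. (a + b) * c) = (\<lambda>c. (\<lambda>c. a * c) c + (\<lambda>c. b * c) c)" by (auto simp: algebra_simps)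
  then show ?thesis using act_sum[OF mop_Dops mop_Dops, of a b x] by simp
qed


lemma sub_act: "D_submodule \<phi> act N \<Longrightarrow> \<delta> \<in> Dops \<phi> \<Longrightarrow> x \<in> N \<Longrightarrow> act \<delta> x \<in> N"
  unfolding D_submodule_def by blast

lemma sub_add: "D_submodule \<phi> act N \<Longrightarrow> x \<in> N \<Longrightarrow> y \<in> N \<Longrightarrow> x + y \<in> N"
  unfolding D_submodule_def by blast

lemma act_mop_comm: "act (\<lambda>c. a * c) (act (\<lambda>c. b * c) x) = act (\<lambda>c. b * c) (act (\<lambda>c. a * c) x)"
proof -
  have "act (\<lambda>c. a * c) (act (\<lambda>c. b * c) x) = act (\<lambda>c. (a * b) * c) x" by (rule act_mop_mult[symmetric])
  also have "a * b = b * a" by (rule mult.commute)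
  also have "act (\<lambda>c. (b * a) * c) x = act (\<lambda>c. b * c) (act (\<lambda>c. a * c) x)" by (rule act_mop_mult)
  finally show ?thesis .
qed

lemma commutator_split:
  assumes "\<delta> \<in> Dops \<phi>" "diff_op (Suc n) \<delta>"
  shows "act (\<lambda>c. r * c) (act \<delta> y) = act \<delta> (act (\<lambda>c. r * c) y) + act (\<lambda>x. r * \<delta> x - \<delta> (r * x)) y"
proof -
  have c: "(\<lambda>x. r * \<delta> x - \<delta> (r * x)) \<in> Dops \<phi>" using Dops_comm[OF assms] by blast
  have "act (\<lambda>c. r * c) (act \<delta> y) = act ((\<lambda>c. r * c) \<circ> \<delta>) y"
    by (rule act_comp[OF mop_Dops assms(1), symmetric])
  also have "(\<lambda>c. r * c) \<circ> \<delta> = (\<lambda>c. (\<lambda>x. \<delta> (r * x)) c + (\<lambda>x. r * \<delta> x - \<delta> (r * x)) c)"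
    by (simp add: fun_eq_iff)
  also have "act \<dots> y = act (\<lambda>x. \<delta> (r * x)) y + act (\<lambda>x. r * \<delta> x - \<delta> (r * x)) y"
    by (rule act_sum[OF Dops_mult_right[OF assms(1)] c])
  also have "act (\<lambda>x. \<delta> (r * x)) y = act (\<delta> \<circ> (\<lambda>c. r * c)) y" by (simp add: o_def)
  also have "\<dots> = act \<delta> (act (\<lambda>c. r * c) y)" by (rule act_comp[OF assms(1) mop_Dops])
  finally show ?thesis .
qed

lemma torsion:
  assumes N: "D_submodule \<phi> act N"
  shows "diff_op n \<delta> \<Longrightarrow> \<delta> \<in> Dops \<phi> \<Longrightarrow>
    (\<forall>rs. length rs = k \<longrightarrow> set rs \<subseteq> Q \<longrightarrow> act (\<lambda>x. prod_list rs * x) y \<in> N) \<Longrightarrow>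
    length rs = k + n \<Longrightarrow> set rs \<subseteq> Q \<Longrightarrow> act (\<lambda>x. prod_list rs * x) (act \<delta> y) \<in> N"
proof (induction n arbitrary: \<delta> k y rs)
  case 0
  then obtain r where \<delta>: "\<delta> = (\<lambda>x. r*x)" by auto
  have "act (\<lambda>x. prod_list rs * x) (act \<delta> y) = act (\<lambda>x. r * x) (act (\<lambda>x. prod_list rs * x) y)"
    unfolding \<delta> by (rule act_mop_comm)
  moreover have "act (\<lambda>x. prod_list rs * x) y \<in> N" using 0 by simp
  ultimately show ?case using sub_act[OF N mop_Dops] by simp
next
  case (Suc n)
  note outerIH = Suc.IH
  show ?case using Suc.prems
  proof (induction k arbitrary: y rs)
    case 0
    have "y \<in> N" using 0(3)[rule_format, of "[]"] by (simp add: act_one)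
    then have "act \<delta> y \<in> N" using sub_act[OF N 0(2)] by blast
    then show ?case using sub_act[OF N mop_Dops] by blast
  next
    case (Suc k)
    then obtain r rs' where rs: "rs = r # rs'" by (cases rs) auto
    have len: "length rs' = k + Suc n" using Suc.prems rs by simp
    have rQ: "r \<in> Q" and rsQ: "set rs' \<subseteq> Q" using Suc.prems rs by auto
    define cm where "cm = (\<lambda>x. r * \<delta> x - \<delta> (r * x))"
    have cm: "cm \<in> Dops \<phi>" "diff_op n cm" using Dops_comm[OF Suc.prems(2) Suc.prems(1)] cm_def by auto
    have "act (\<lambda>x. prod_list rs * x) (act \<delta> y) = act (\<lambda>x. prod_list rs' * x) (act (\<lambda>c. r * c) (act \<delta> y))"
      using act_mop_comm[of "prod_list rs'" r] act_mop_mult[of r "prod_list rs'"] rs by simp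
    also have "\<dots> = act (\<lambda>x. prod_list rs' * x) (act \<delta> (act (\<lambda>c. r * c) y))
        + act (\<lambda>x. prod_list rs' * x) (act cm y)"
      using commutator_split[OF Suc.prems(2) Suc.prems(1)] act_add[OF mop_Dops] cm_def by simp
    also have "\<dots> \<in> N"
    proof (rule sub_add[OF N])
      have T: "\<forall>qs. length qs = k \<longrightarrow> set qs \<subseteq> Q \<longrightarrow> act (\<lambda>x. prod_list qs * x) (act (\<lambda>c. r * c) y) \<in> N"
      proof (intro allI impI)
        fix qs :: "'c list" assume "length qs = k" "set qs \<subseteq> Q"
        then have "act (\<lambda>x. prod_list (r # qs) * x) y \<in> N"
          using Suc.prems(3)[rule_format, of "r # qs"] rQ by simp
        then show "act (\<lambda>x. prod_list qs * x) (act (\<lambda>c. r * c) y) \<in> N"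
          using act_mop_comm[of "prod_list qs" r] act_mop_mult[of r "prod_list qs"] by simp
      qed
      show "act (\<lambda>x. prod_list rs' * x) (act \<delta> (act (\<lambda>c. r * c) y)) \<in> N"
        using Suc.IH[OF Suc.prems(1) Suc.prems(2) T len rsQ] .
      show "act (\<lambda>x. prod_list rs' * x) (act cm y) \<in> N"
        using outerIH[OF cm(2) cm(1) Suc.prems(3)] len rsQ by simp
    qed
    finally show ?case .
  qed
qed


lemma tors_mono:
  assumes N: "D_submodule \<phi> act N"
    and T: "\<forall>rs. length rs = k \<longrightarrow> set rs \<subseteq> Q \<longrightarrow> act (\<lambda>x. prod_list rs * x) y \<in> N"
  shows "\<forall>rs. length rs = k + j \<longrightarrow> set rs \<subseteq> Q \<longrightarrow> act (\<lambda>x. prod_list rs * x) y \<in> N"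
proof (intro allI impI)
  fix rs :: "'c list" assume l: "length rs = k + j" and s: "set rs \<subseteq> Q"
  have "rs = take k rs @ drop k rs" by simp
  then have p: "prod_list rs = prod_list (take k rs) * prod_list (drop k rs)"
    by (metis prod_list.append)
  have "act (\<lambda>x. prod_list (take k rs) * x) y \<in> N"
    using T l s set_take_subset[of k rs] by auto
  then have "act (\<lambda>x. prod_list (drop k rs) * x) (act (\<lambda>x. prod_list (take k rs) * x) y) \<in> N"
    by (rule sub_act[OF N mop_Dops])
  then show "act (\<lambda>x. prod_list rs * x) y \<in> N"
    using act_mop_comm act_mop_mult p by metis
qed

lemma level_sub:
  assumes N0: "D_submodule \<phi> act N0" and N1: "D_submodule \<phi> act N1" and sub: "N0 \<subseteq> N1"
    and nomid: "\<not> (\<exists>L. D_submodule \<phi> act L \<and> N0 \<subset> L \<and> L \<subset> N1)"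
    and x: "x \<in> N1" "x \<notin> N0" and x': "x' \<in> N1"
    and Q: "Q = {r. act (\<lambda>c. r * c) x \<in> N0}"
    and Q': "is_prime_ideal Q'" "Q' = {r. act (\<lambda>c. r * c) x' \<in> N0}"
  shows "Q \<subseteq> Q'"
proof -
  define T where "T = (\<lambda>k y. \<forall>rs. length rs = k \<longrightarrow> set rs \<subseteq> Q \<longrightarrow> act (\<lambda>x. prod_list rs * x) y \<in> N0)"
  define L where "L = {y \<in> N1. \<exists>k. T k y}"
  have T0: "T 0 y" if "y \<in> N0" for y using that by (simp add: T_def act_mop_1)
  have Tm: "T (k + j) y" if "T k y" for k j y using tors_mono[OF N0, of k Q y j] that by (simp add: T_def)
  have subL: "D_submodule \<phi> act L"
    unfolding D_submodule_def
  proof (intro conjI ballI)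
    show "0 \<in> L" using T0 N0 N1 unfolding L_def D_submodule_def by blast
  next
    fix a b assume a: "a \<in> L" and b: "b \<in> L"
    then obtain ka kb where ka: "T ka a" and kb: "T kb b" and ab: "a \<in> N1" "b \<in> N1" unfolding L_def by auto
    have "T (ka + kb) a" using Tm ka by blast
    moreover have "T (ka + kb) b" using Tm[OF kb, of ka] by (simp add: add.commute)
    ultimately have "T (ka + kb) (a + b)"
      unfolding T_def using act_add[OF mop_Dops] sub_add[OF N0] by simp
    then show "a + b \<in> L" using ab sub_add[OF N1] unfolding L_def by blast
  next
    fix a assume "a \<in> L"
    then obtain k where k: "T k a" and a: "a \<in> N1" unfolding L_def by auto
    have "T k (- a)" using k N0 unfolding T_def D_submodule_def by (simp add: act_neg[OF mop_Dops])
    then show "- a \<in> L" using a N1 unfolding L_def D_submodule_def by blast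
  next
    fix \<delta> a assume d: "\<delta> \<in> Dops \<phi>" and "a \<in> L"
    then obtain k where k: "T k a" and a: "a \<in> N1" unfolding L_def by auto
    obtain n where n: "diff_op n \<delta>" using d unfolding Dops_def by auto
    have "T (k + n) (act \<delta> a)" unfolding T_def
      using torsion[OF N0 n d, of k Q a] k unfolding T_def by blast
    then show "act \<delta> a \<in> L" using sub_act[OF N1 d a] unfolding L_def by blast
  qed
  have "N0 \<subseteq> L" using T0 sub unfolding L_def by blast
  moreover have "T 1 x"
    unfolding T_def
  proof (intro allI impI)
    fix rs :: "'c list" assume "length rs = 1" "set rs \<subseteq> Q"
    then obtain r where "rs = [r]" "r \<in> Q" by (cases rs) auto
    then show "act (\<lambda>x. prod_list rs * x) x \<in> N0" using Q by simp
  qed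
  then have "x \<in> L" using x unfolding L_def by blast
  ultimately have "N0 \<subset> L" using x by blast
  moreover have "L \<subseteq> N1" unfolding L_def by blast
  ultimately have "L = N1" using nomid subL by blast
  then obtain k where k: "T k x'" using x' unfolding L_def by blast
  show "Q \<subseteq> Q'"
  proof
    fix r assume r: "r \<in> Q"
    have "set (replicate k r) \<subseteq> Q" using r by auto
    then have "act (\<lambda>c. prod_list (replicate k r) * c) x' \<in> N0" using k unfolding T_def
      by (metis length_replicate)
    then have "r ^ k \<in> Q'" using Q'(2) by (simp add: prod_list_replicate)
    then show "r \<in> Q'" using prime_pow[OF Q'(1)] by blast
  qed
qed

lemma C_ann_ideal: "is_ideal (C_ann act m)"
  unfolding is_ideal_def C_ann_def
  by (auto simp: act_mop_0 act_mop_add act_mop_mult act_zero[OF mop_Dops])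

lemma exists_assoc:
  assumes noeth: "noetherian_ring TYPE('c)" and m: "(m::'m) \<noteq> 0"
  shows "\<exists>P. P \<in> assoc_primes act"
proof -
  define F where "F = {C_ann act m | m. m \<noteq> 0}"
  have "F \<noteq> {}" using m unfolding F_def by blast
  moreover have "\<forall>I\<in>F. is_ideal I" unfolding F_def using C_ann_ideal by blast
  ultimately obtain I where I: "I \<in> F" and mx: "\<forall>J\<in>F. I \<subseteq> J \<longrightarrow> J = I"
    using noeth_max[OF noeth] by blast
  then obtain m0 where m0: "m0 \<noteq> 0" "I = C_ann act m0" unfolding F_def by blast
  have "is_prime_ideal I" unfolding is_prime_ideal_def
  proof (intro conjI allI impI)
    show "is_ideal I" using m0 C_ann_ideal by simp
    have "1 \<notin> C_ann act m0" unfolding C_ann_def mem_Collect_eq using m0(1) act_mop_1[of m0] by metis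
    then show "I \<noteq> UNIV" using m0(2) by blast
  next
    fix a b assume ab: "a * b \<in> I"
    show "a \<in> I \<or> b \<in> I"
    proof (cases "a \<in> I")
      case True then show ?thesis by blast
    next
      case False
      then have a: "a \<notin> I" .
      define m1 where "m1 = act (\<lambda>c. a * c) m0"
      have "m1 \<noteq> 0" using a m0 unfolding m1_def C_ann_def by auto
      moreover have "I \<subseteq> C_ann act m1"
      proof
        fix r assume "r \<in> I"
        then have "act (\<lambda>c. r * c) m0 = 0" using m0 unfolding C_ann_def by auto
        then show "r \<in> C_ann act m1"
          unfolding C_ann_def m1_def using act_mop_comm[of r a m0] act_zero[OF mop_Dops] by simp
      qed
      ultimately have eq: "C_ann act m1 = I" using mx unfolding F_def by blast
      have "act (\<lambda>c. (a * b) * c) m0 = 0" using ab m0 unfolding C_ann_def by auto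
      then have "act (\<lambda>c. b * c) m1 = 0" unfolding m1_def
        using act_mop_comm[of b a m0] act_mop_mult[of a b m0] by simp
      then have "b \<in> I" using eq unfolding C_ann_def by auto
      then show ?thesis by blast
    qed
  qed
  then show ?thesis using m0 unfolding assoc_primes_def by blast
qed

lemma C_ann_zero: "C_ann act 0 = UNIV"
  unfolding C_ann_def using act_zero[OF mop_Dops] by auto

lemma sub_zero: "D_submodule \<phi> act {0}"
  unfolding D_submodule_def using act_zero by auto

lemma sub_univ: "D_submodule \<phi> act UNIV"
  unfolding D_submodule_def by auto

end

theorem mainTheorem2:
  fixes \<phi> :: "'a::comm_ring_1 \<Rightarrow> 'c::comm_ring_1"
    and act :: "('c \<Rightarrow> 'c) \<Rightarrow> 'm::ab_group_add \<Rightarrow> 'm"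
  assumes "ring_hom_map \<phi>"
    and "noetherian_ring TYPE('c)"
    and "D_module \<phi> act"
  shows "(finite_length \<phi> act \<longrightarrow> finite (assoc_primes act))
       \<and> (simple_D_module \<phi> act \<longrightarrow> (\<exists>!P. P \<in> assoc_primes act))"
proof (intro conjI impI)
  note D = assms(3)
  note noeth = assms(2)
  have amm: "act (\<lambda>c. (a * b) * c) x = act (\<lambda>c. a * c) (act (\<lambda>c. b * c) x)" for a b x
    by (rule act_mop_mult[OF D])
  have amc: "act (\<lambda>c. a * c) (act (\<lambda>c. b * c) x) = act (\<lambda>c. b * c) (act (\<lambda>c. a * c) x)" for a b x
    by (rule act_mop_comm[OF D])
  {
    assume simple: "simple_D_module \<phi> act"
    then obtain m :: 'm where "m \<noteq> 0" unfolding simple_D_module_def by blast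
    then obtain P where P: "P \<in> assoc_primes act" using exists_assoc[OF D noeth] by blast
    have nomid: "\<not> (\<exists>L. D_submodule \<phi> act L \<and> {0} \<subset> L \<and> L \<subset> UNIV)"
      using simple unfolding simple_D_module_def by blast
    have sub: "P1 \<subseteq> P2" if h1: "P1 \<in> assoc_primes act" and h2: "P2 \<in> assoc_primes act" for P1 P2
    proof -
      obtain m1 where m1: "is_prime_ideal P1" "P1 = C_ann act m1" using h1 unfolding assoc_primes_def by blast
      obtain m2 where m2: "is_prime_ideal P2" "P2 = C_ann act m2" using h2 unfolding assoc_primes_def by blast
      have "m1 \<noteq> 0" using m1 C_ann_zero[OF D] unfolding is_prime_ideal_def by auto
      have e1: "P1 = {r. act (\<lambda>c. r * c) m1 \<in> {0}}" using m1(2) unfolding C_ann_def by simp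
      have e2: "P2 = {r. act (\<lambda>c. r * c) m2 \<in> {0}}" using m2(2) unfolding C_ann_def by simp
      show ?thesis
        by (rule level_sub[OF D sub_zero[OF D] sub_univ[OF D] _ nomid _ _ _ e1 m2(1) e2])
          (use \<open>m1 \<noteq> 0\<close> in auto)
    qed
    show "\<exists>!P. P \<in> assoc_primes act"
    proof (rule ex1I[of _ P])
      show "P \<in> assoc_primes act" by (rule P)
      fix P' assume "P' \<in> assoc_primes act"
      then show "P' = P" using sub[OF P _] sub[OF _ P] by (intro subset_antisym) auto
    qed
  }
  {
    assume "finite_length \<phi> act"
    then obtain Ns where cs: "composition_series \<phi> act Ns" unfolding finite_length_def by blast
    have ne: "Ns \<noteq> []" and hd: "hd Ns = {0}" and lst: "last Ns = UNIV"
      and subs: "\<And>N. N \<in> set Ns \<Longrightarrow> D_submodule \<phi> act N"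
      and steps: "\<And>i. Suc i < length Ns \<Longrightarrow> Ns ! i \<subset> Ns ! Suc i \<and>
        \<not> (\<exists>L. D_submodule \<phi> act L \<and> Ns ! i \<subset> L \<and> L \<subset> Ns ! Suc i)"
      using cs unfolding composition_series_def by blast+
    define S where "S i = {Q. is_prime_ideal Q \<and> (\<exists>x\<in>Ns ! Suc i. x \<notin> Ns ! i \<and> Q = {r. act (\<lambda>c. r * c) x \<in> Ns ! i})}" for i
    have finS: "finite (S i)" if i: "Suc i < length Ns" for i
    proof -
      have N0: "D_submodule \<phi> act (Ns ! i)" and N1: "D_submodule \<phi> act (Ns ! Suc i)"
        using subs i by auto
      have st: "Ns ! i \<subseteq> Ns ! Suc i" "\<not> (\<exists>L. D_submodule \<phi> act L \<and> Ns ! i \<subset> L \<and> L \<subset> Ns ! Suc i)"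
        using steps[OF i] by auto
      have "Q1 \<subseteq> Q2" if h1: "Q1 \<in> S i" and h2: "Q2 \<in> S i" for Q1 Q2
      proof -
        obtain x1 where x1: "x1 \<in> Ns ! Suc i" "x1 \<notin> Ns ! i" "Q1 = {r. act (\<lambda>c. r * c) x1 \<in> Ns ! i}"
          using h1 unfolding S_def by blast
        obtain x2 where x2: "x2 \<in> Ns ! Suc i" "Q2 = {r. act (\<lambda>c. r * c) x2 \<in> Ns ! i}" "is_prime_ideal Q2"
          using h2 unfolding S_def by blast
        show ?thesis using level_sub[OF D N0 N1 st x1(1,2) x2(1) x1(3) x2(3) x2(2)] .
      qed
      then have "\<exists>Q. S i \<subseteq> {Q}" by blast
      then show ?thesis using finite_subset by blast
    qed
    have "assoc_primes act \<subseteq> (\<Union>i\<in>{i. Suc i < length Ns}. S i)"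
    proof
      fix P assume "P \<in> assoc_primes act"
      then obtain m where P: "is_prime_ideal P" "P = C_ann act m" unfolding assoc_primes_def by blast
      have m: "m \<noteq> 0" using P C_ann_zero[OF D] unfolding is_prime_ideal_def by auto
      define Pj where "Pj j = (\<exists>r. act (\<lambda>c. r * c) m \<noteq> 0 \<and> act (\<lambda>c. r * c) m \<in> Ns ! j)" for j
      have a1: "act (\<lambda>c. 1 * c) m = m" by (rule act_mop_1[OF D])
      have "Ns ! (length Ns - 1) = UNIV" using lst last_conv_nth[OF ne] by simp
      then have "Pj (length Ns - 1)" unfolding Pj_def using a1 m by (metis UNIV_I)
      then obtain j where j: "Pj j" "\<forall>j'<j. \<not> Pj j'" using exists_least_iff[of Pj] by blast
      have "j \<le> length Ns - 1" using j(2) \<open>Pj (length Ns - 1)\<close> by (meson not_le)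
      then have jl: "j < length Ns" using ne by (cases Ns) auto
      have "j \<noteq> 0" using j(1) hd hd_conv_nth[OF ne] unfolding Pj_def by auto
      then obtain i where ji: "j = Suc i" by (cases j) auto
      obtain r0 where r0: "act (\<lambda>c. r0 * c) m \<noteq> 0" "act (\<lambda>c. r0 * c) m \<in> Ns ! Suc i"
        using j(1) ji unfolding Pj_def by blast
      have mini: "\<And>r. act (\<lambda>c. r * c) m \<in> Ns ! i \<Longrightarrow> act (\<lambda>c. r * c) m = 0"
        using j(2) ji unfolding Pj_def by auto
      define x where "x = act (\<lambda>c. r0 * c) m"
      have Ni: "D_submodule \<phi> act (Ns ! i)" using subs jl ji by auto
      have r0P: "r0 \<notin> P" using r0 P unfolding C_ann_def by auto
      have xi: "x \<notin> Ns ! i" using mini r0 x_def by blast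
      have "{s. act (\<lambda>c. s * c) x \<in> Ns ! i} = P"
      proof (intro set_eqI iffI)
        fix s assume "s \<in> {s. act (\<lambda>c. s * c) x \<in> Ns ! i}"
        then have "act (\<lambda>c. (s * r0) * c) m \<in> Ns ! i" unfolding x_def by (simp add: amm)
        then have "act (\<lambda>c. (s * r0) * c) m = 0" by (rule mini)
        then have "s * r0 \<in> P" using P unfolding C_ann_def by simp
        then show "s \<in> P" using P(1) r0P unfolding is_prime_ideal_def by blast
      next
        fix s assume "s \<in> P"
        then have "act (\<lambda>c. s * c) m = 0" using P unfolding C_ann_def by simp
        then have "act (\<lambda>c. s * c) x = 0" unfolding x_def using amc[of s r0 m] act_zero[OF D mop_Dops] by simp
        then show "s \<in> {s. act (\<lambda>c. s * c) x \<in> Ns ! i}" using Ni unfolding D_submodule_def by simp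
      qed
      then have "P \<in> S i" unfolding S_def using P(1) r0(2) xi x_def by blast
      then show "P \<in> (\<Union>i\<in>{i. Suc i < length Ns}. S i)" using jl ji by blast
    qed
    moreover have "finite (\<Union>i\<in>{i. Suc i < length Ns}. S i)"
    proof (rule finite_UN_I)
      show "finite {i. Suc i < length Ns}" by (rule finite_subset[of _ "{..<length Ns}"]) auto
    qed (use finS in auto)
    ultimately show "finite (assoc_primes act)" using finite_subset by blast
  }
qed

end
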